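(* Let $R$ be a GWNC ring. Then the Jacobson radical $J(R)$ is nil.
   Context: All rings are associative with identity. For a ring $S$, $U(S)$, ${\rm Nil}(S)$, ${\rm Id}(S)$ denote units, nilpotents, idempotents. $S$ is GWNC if every $a\in S\setminus U(S)$ can be written as $a=q+e$ or $a=q-e$ with $q\in{\rm Nil}(S)$, $e\in{\rm Id}(S)$. *)

theory Defs
  imports Main
begin

definition units_of_ring :: "'a::ring_1 set" where
  "units_of_ring = {a. \<exists>b. a * b = 1 \<and> b * a = 1}"

definition nilpotents :: "'a::ring_1 set" where
  "nilpotents = {a. \<exists>n::nat. a ^ n = 0}"

definition idempotents :: "'a::ring_1 set" where
  "idempotents = {e. e * e = e}"

definition GWNC :: "'a::ring_1 itself \<Rightarrow> bool" where
  "GWNC _ \<longleftrightarrow> (\<forall>a::'a. a \<notin> units_of_ring \<longrightarrow>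
      (\<exists>q \<in> nilpotents. \<exists>e \<in> idempotents. a = q + e \<or> a = q - e))"

definition left_ideal :: "'a::ring_1 set \<Rightarrow> bool" where
  "left_ideal I \<longleftrightarrow> 0 \<in> I \<and> (\<forall>x\<in>I. \<forall>y\<in>I. x + y \<in> I) \<and> (\<forall>x\<in>I. - x \<in> I)
     \<and> (\<forall>r x. x \<in> I \<longrightarrow> r * x \<in> I)"

definition maximal_left_ideal :: "'a::ring_1 set \<Rightarrow> bool" where
  "maximal_left_ideal M \<longleftrightarrow> left_ideal M \<and> M \<noteq> UNIV \<and>
     (\<forall>I. left_ideal I \<and> M \<subseteq> I \<longrightarrow> I = M \<or> I = UNIV)"

definition jacobson :: "'a::ring_1 set" where
  "jacobson = \<Inter> {M. maximal_left_ideal M}"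

definition nil_set :: "'a::ring_1 set \<Rightarrow> bool" where
  "nil_set S \<longleftrightarrow> S \<subseteq> nilpotents"

end

theory Submission
  imports Defs
begin

lemma li_one: "left_ideal (I::'a::ring_1 set) \<Longrightarrow> 1 \<in> I \<Longrightarrow> I = UNIV"
  unfolding left_ideal_def by (metis UNIV_eq_I mult.right_neutral)

lemma exists_max:
  fixes L :: "'a::ring_1 set"
  assumes L: "left_ideal L" "1 \<notin> L"
  shows "\<exists>M. maximal_left_ideal M \<and> L \<subseteq> M"
proof -
  define S where "S = {I::'a set. left_ideal I \<and> L \<subseteq> I \<and> 1 \<notin> I}"
  have "\<forall>C\<in>chains S. \<exists>U\<in>S. \<forall>X\<in>C. X \<subseteq> U"
  proof
    fix C assume C: "C \<in> chains S"
    show "\<exists>U\<in>S. \<forall>X\<in>C. X \<subseteq> U"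
    proof (cases "C = {}")
      case True then show ?thesis using L unfolding S_def by auto
    next
      case False
      have CS: "C \<subseteq> S" and ch: "\<forall>X\<in>C. \<forall>Y\<in>C. X \<subseteq> Y \<or> Y \<subseteq> X"
        using C unfolding chains_def chain_subset_def by auto
      have "left_ideal (\<Union>C)"
        unfolding left_ideal_def
      proof (intro conjI ballI allI impI)
        show "0 \<in> \<Union>C" using False CS unfolding S_def left_ideal_def by auto
      next
        fix x y assume "x \<in> \<Union>C" "y \<in> \<Union>C"
        then obtain X Y where XY: "X \<in> C" "Y \<in> C" "x \<in> X" "y \<in> Y" by auto
        have LX: "left_ideal X" "left_ideal Y" using XY CS unfolding S_def by auto
        from ch XY(1,2) have "X \<subseteq> Y \<or> Y \<subseteq> X" by auto
        then show "x + y \<in> \<Union>C"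
        proof
          assume "X \<subseteq> Y"
          then have "x + y \<in> Y" using XY LX unfolding left_ideal_def by auto
          then show ?thesis using XY by auto
        next
          assume "Y \<subseteq> X"
          then have "x + y \<in> X" using XY LX unfolding left_ideal_def by auto
          then show ?thesis using XY by auto
        qed
      next
        fix x assume "x \<in> \<Union>C"
        then obtain X where XY: "X \<in> C" "x \<in> X" by auto
        have LX: "left_ideal X" using XY CS unfolding S_def by auto
        then have "- x \<in> X" using XY unfolding left_ideal_def by auto
        then show "- x \<in> \<Union>C" using XY by auto
      next
        fix r x assume "x \<in> \<Union>C"
        then obtain X where XY: "X \<in> C" "x \<in> X" by auto
        have LX: "left_ideal X" using XY CS unfolding S_def by auto
        then have "r * x \<in> X" using XY unfolding left_ideal_def by auto
        then show "r * x \<in> \<Union>C" using XY by auto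
      qed
      moreover have "L \<subseteq> \<Union>C" using False CS unfolding S_def by auto
      moreover have "1 \<notin> \<Union>C" using CS unfolding S_def by auto
      ultimately show ?thesis unfolding S_def by blast
    qed
  qed
  from Zorn_Lemma2[OF this] obtain M where M: "M \<in> S" "\<forall>X\<in>S. M \<subseteq> X \<longrightarrow> X = M" by blast
  have "maximal_left_ideal M"
    unfolding maximal_left_ideal_def
  proof (intro conjI allI impI)
    show "left_ideal M" using M unfolding S_def by auto
    show "M \<noteq> UNIV" using M unfolding S_def by auto
    fix I assume I: "left_ideal I \<and> M \<subseteq> I"
    show "I = M \<or> I = UNIV"
    proof (cases "1 \<in> I")
      case True then show ?thesis using li_one I by blast
    next
      case False then have "I \<in> S" using I M unfolding S_def by auto
      then show ?thesis using M I by blast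
    qed
  qed
  then show ?thesis using M unfolding S_def by auto
qed

lemma jac_mem: "x \<in> (jacobson::'a::ring_1 set) \<Longrightarrow> maximal_left_ideal M \<Longrightarrow> x \<in> M"
  unfolding jacobson_def by blast

lemma jac_intro: "(\<And>M. maximal_left_ideal M \<Longrightarrow> (x::'a::ring_1) \<in> M) \<Longrightarrow> x \<in> jacobson"
  unfolding jacobson_def by blast

lemma max_li: "maximal_left_ideal M \<Longrightarrow> left_ideal M"
  unfolding maximal_left_ideal_def by simp

lemma jac_left: "x \<in> (jacobson::'a::ring_1 set) \<Longrightarrow> r * x \<in> jacobson"
proof (rule jac_intro)
  fix M :: "'a set" assume "x \<in> jacobson" "maximal_left_ideal M"
  then have "x \<in> M" "left_ideal M" using jac_mem max_li by auto
  then show "r * x \<in> M" unfolding left_ideal_def by simp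
qed

lemma jac_add: "x \<in> (jacobson::'a::ring_1 set) \<Longrightarrow> y \<in> jacobson \<Longrightarrow> x + y \<in> jacobson"
proof (rule jac_intro)
  fix M :: "'a set" assume "x \<in> jacobson" "y \<in> jacobson" "maximal_left_ideal M"
  then have "x \<in> M" "y \<in> M" "left_ideal M" using jac_mem max_li by auto
  then show "x + y \<in> M" unfolding left_ideal_def by simp
qed

lemma jac_leftinv:
  fixes x :: "'a::ring_1"
  assumes x: "x \<in> jacobson"
  shows "\<exists>u. u * (1 - x) = 1"
proof (rule ccontr)
  assume nu: "\<not> (\<exists>u. u * (1 - x) = 1)"
  define L where "L = {r * (1 - x) | r. True}"
  have "left_ideal L" unfolding left_ideal_def L_def
  proof (intro conjI ballI allI impI)
    show "0 \<in> {r * (1 - x) |r. True}" by (auto intro!: exI[of _ 0])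
  next
    fix a b assume "a \<in> {r * (1 - x) |r. True}" "b \<in> {r * (1 - x) |r. True}"
    then obtain r s where "a = r * (1 - x)" "b = s * (1 - x)" by auto
    then show "a + b \<in> {r * (1 - x) |r. True}" by (auto intro: exI[of _ "r + s"] simp: distrib_right)
  next
    fix a assume "a \<in> {r * (1 - x) |r. True}"
    then obtain r where "a = r * (1 - x)" by auto
    then show "- a \<in> {r * (1 - x) |r. True}" by (auto intro: exI[of _ "- r"])
  next
    fix s a assume "a \<in> {r * (1 - x) |r. True}"
    then obtain r where "a = r * (1 - x)" by auto
    then show "s * a \<in> {r * (1 - x) |r. True}" by (auto intro: exI[of _ "s * r"] simp: mult.assoc)
  qed
  moreover have "1 \<notin> L" using nu unfolding L_def by auto
  ultimately obtain M where M: "maximal_left_ideal M" "L \<subseteq> M" using exists_max by blast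
  have "1 - x \<in> M" using M unfolding L_def by (auto intro!: exI[of _ 1])
  moreover have "x \<in> M" using jac_mem[OF x M(1)] .
  moreover have add: "\<forall>a\<in>M. \<forall>b\<in>M. a + b \<in> M" using max_li[OF M(1)] unfolding left_ideal_def by simp
  ultimately have "(1 - x) + x \<in> M" by blast
  then have "1 \<in> M" by simp
  then show False using M(1) li_one unfolding maximal_left_ideal_def by blast
qed

lemma max_span:
  fixes M :: "'a::ring_1 set"
  assumes M: "maximal_left_ideal M" and y: "y \<notin> M"
  shows "\<exists>m\<in>M. \<exists>r. 1 = m + r * y"
proof -
  define I where "I = {m + r * y | m r. m \<in> M}"
  have LM: "left_ideal M" and NU: "M \<noteq> UNIV"
    and MX: "\<And>J. left_ideal J \<Longrightarrow> M \<subseteq> J \<Longrightarrow> J = M \<or> J = UNIV"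
    using M unfolding maximal_left_ideal_def by auto
  have M0: "0 \<in> M" and Madd: "\<And>a b. a \<in> M \<Longrightarrow> b \<in> M \<Longrightarrow> a + b \<in> M"
    and Mneg: "\<And>a. a \<in> M \<Longrightarrow> - a \<in> M" and Mmul: "\<And>s a. a \<in> M \<Longrightarrow> s * a \<in> M"
    using LM unfolding left_ideal_def by auto
  have memI: "\<And>m r. m \<in> M \<Longrightarrow> m + r * y \<in> I" unfolding I_def by blast
  have "left_ideal I" unfolding left_ideal_def
  proof (intro conjI ballI allI impI)
    have "0 + 0 * y \<in> I" using memI M0 by blast
    then show "0 \<in> I" by simp
  next
    fix a b assume "a \<in> I" "b \<in> I"
    then obtain m r m' r' where "a = m + r * y" "b = m' + r' * y" "m \<in> M" "m' \<in> M"
      unfolding I_def by auto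
    moreover have "a + b = (m + m') + (r + r') * y" using calculation by (simp add: algebra_simps)
    moreover have "(m + m') + (r + r') * y \<in> I" using memI Madd calculation by blast
    ultimately show "a + b \<in> I" by (simp only:)
  next
    fix a assume "a \<in> I"
    then obtain m r where "a = m + r * y" "m \<in> M" unfolding I_def by auto
    moreover have "- a = (- m) + (- r) * y" using calculation by (simp add: algebra_simps)
    moreover have "(- m) + (- r) * y \<in> I" using memI Mneg calculation by blast
    ultimately show "- a \<in> I" by (simp only:)
  next
    fix s a assume "a \<in> I"
    then obtain m r where "a = m + r * y" "m \<in> M" unfolding I_def by auto
    moreover have "s * a = (s * m) + (s * r) * y" using calculation by (simp add: algebra_simps)
    moreover have "(s * m) + (s * r) * y \<in> I" using memI Mmul calculation by blast
    ultimately show "s * a \<in> I" by (simp only:)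
  qed
  moreover have "M \<subseteq> I"
  proof
    fix m assume "m \<in> M" then have "m + 0 * y \<in> I" using memI by blast
    then show "m \<in> I" by simp
  qed
  moreover have "y \<in> I" using memI[OF M0, of 1] by simp
  ultimately have "I = UNIV" using MX y by blast
  then have "1 \<in> I" by auto
  then show ?thesis unfolding I_def by auto
qed

lemma jac_right:
  fixes x :: "'a::ring_1"
  assumes x: "x \<in> jacobson"
  shows "x * s \<in> jacobson"
  unfolding jacobson_def
proof
  fix M :: "'a set" assume "M \<in> {M. maximal_left_ideal M}"
  then have M: "maximal_left_ideal M" by auto
  show "x * s \<in> M"
  proof (rule ccontr)
    assume "x * s \<notin> M"
    then obtain m r where m: "m \<in> M" "1 = m + r * (x * s)" using max_span M by blast
    have "s * r * x \<in> jacobson" using jac_left x by blast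
    then obtain u where u: "u * (1 - s * r * x) = 1" using jac_leftinv by blast
    have "(1 + r * x * u * s) * (1 - r * x * s) = 1 - r * x * s + r * x * (u * (1 - s * r * x)) * s"
      by (simp add: algebra_simps)
    also have "\<dots> = 1" using u by simp
    finally have i1: "(1 + r * x * u * s) * (1 - r * x * s) = 1" .
    have "m = 1 - r * x * s" using m(2) by (simp add: mult.assoc eq_diff_eq)
    then have inv: "(1 + r * x * u * s) * m = 1" using i1 by simp
    have LM: "left_ideal M" and NU: "M \<noteq> UNIV" using M unfolding maximal_left_ideal_def by auto
    have "(1 + r * x * u * s) * m \<in> M" using LM m(1) unfolding left_ideal_def by simp
    then have "1 \<in> M" using inv by simp
    then show False using LM NU li_one by blast
  qed
qed

lemma jac_pow:
  fixes x y :: "'a::ring_1"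
  assumes x: "x \<in> jacobson"
  shows "(x + y) ^ n - y ^ n \<in> jacobson"
proof (induction n)
  case 0
  have "0 * x \<in> (jacobson::'a set)" using jac_left x by blast
  then show ?case by simp
next
  case (Suc n)
  have "(x + y) ^ Suc n - y ^ Suc n = (x + y) * ((x + y) ^ n - y ^ n) + x * y ^ n"
    by (simp add: algebra_simps)
  moreover have "(x + y) * ((x + y) ^ n - y ^ n) \<in> jacobson" by (rule jac_left[OF Suc.IH])
  moreover have "x * y ^ n \<in> jacobson" by (rule jac_right[OF x])
  ultimately show ?case using jac_add by simp
qed

lemma idem_pow: "(e::'a::ring_1) * e = e \<Longrightarrow> e ^ Suc n = e"
  by (induction n) (auto simp: mult.assoc[symmetric])

theorem lemma2p4:
  assumes "GWNC TYPE('a::ring_1)"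
  shows "nil_set (jacobson :: 'a set)"
  unfolding nil_set_def
proof
  fix a :: 'a assume a: "a \<in> jacobson"
  show "a \<in> nilpotents"
  proof (cases "a \<in> units_of_ring")
    case True
    then obtain b where "b * a = 1" unfolding units_of_ring_def by auto
    then have "1 \<in> (jacobson::'a set)" using jac_left[OF a, of b] by simp
    then obtain u where "u * (1 - 1) = (1::'a)" using jac_leftinv by blast
    then have "(0::'a) = 1" by simp
    have "a = a * 1" by simp
    also have "\<dots> = a * 0" using \<open>(0::'a) = 1\<close> by simp
    finally have "a ^ 1 = 0" by simp
    then show ?thesis unfolding nilpotents_def by blast
  next
    case False
    then obtain q e where q: "q \<in> nilpotents" and e: "e * e = e" and
      d: "a = q + e \<or> a = q - e"
      using assms unfolding GWNC_def idempotents_def by blast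
    obtain n where qn: "q ^ n = 0" using q unfolding nilpotents_def by auto
    then have qn': "q ^ Suc n = 0" by simp
    have ee: "e ^ Suc n = e" using idem_pow e by blast
    have eJ: "e \<in> jacobson"
    proof (cases "a = q + e")
      case True
      then have "q = a + - e" by simp
      then have "- ((- e) ^ Suc n) \<in> (jacobson::'a set)" using jac_pow[OF a, of "- e" "Suc n"] qn' by simp
      then have "(-1) * (- ((- e) ^ Suc n)) \<in> (jacobson::'a set)" using jac_left by blast
      then have "(-1) ^ Suc n * ((-1) * (- ((- e) ^ Suc n))) \<in> (jacobson::'a set)" using jac_left by blast
      moreover have "(-1) ^ Suc n * ((-1) * (- ((- e) ^ Suc n))) = ((-1) ^ Suc n * (-1) ^ Suc n) * e ^ Suc n"
        by (simp only: power_minus[of e "Suc n"] mult.assoc) simp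
      moreover have "(- 1) ^ Suc n * (- 1) ^ Suc n = (1::'a)"
        by (simp only: power_add[symmetric]) simp
      ultimately have "e ^ Suc n \<in> (jacobson::'a set)" by simp
      then show ?thesis using ee by simp
    next
      case False
      then have "q = a + e" using d by simp
      then have "- (e ^ Suc n) \<in> (jacobson::'a set)" using jac_pow[OF a, of e "Suc n"] qn' by simp
      then have "(-1) * (- (e ^ Suc n)) \<in> (jacobson::'a set)" using jac_left by blast
      then show ?thesis using ee by simp
    qed
    then obtain u where u: "u * (1 - e) = 1" using jac_leftinv by blast
    have "e = u * (1 - e) * e" using u by simp
    also have "\<dots> = 0" using e by (simp add: algebra_simps mult.assoc)
    finally have "e = 0" .
    then have "a = q" using d by auto
    then show ?thesis using q by simp
  qed
qed

end
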